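(* Let $X$ be a non-empty metric space and let $\mathcal{U}$ be a cover of $X$ (not necessarily open). Then \[ L(\mathcal{U})\leq L_{Diam}(\mathcal{U})\leq 2\cdot L(\mathcal{U}). \]
   Context: For $x\in X$ and $S\subseteq X$, $\operatorname{dist}(x,S)=\inf_{z\in S}d(x,z)$, with $\operatorname{dist}(x,\emptyset)=\infty$. For a cover $\mathcal{U}$ of $X$ (i.e. $X=\bigcup\mathcal{U}$): $L(\mathcal{U},x):=\sup_{U\in\mathcal{U}}\operatorname{dist}(x,X\setminus U)$ and $L(\mathcal{U}):=\inf_{x\in X}L(\mathcal{U},x)$. Also $L_{Diam}(\mathcal{U}):=\sup\{D\geq 0 \mid \text{for every } A\subseteq X \text{ with } \operatorname{diam}A\leq D \text{ there exists } U\in\mathcal{U} \text{ with } A\subseteq U\}$. All these quantities take values in $[0,\infty]$. *)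

theory Defs
  imports "HOL-Analysis.Analysis"
begin

definition setdist_e :: "('a \<Rightarrow> 'a \<Rightarrow> real) \<Rightarrow> 'a \<Rightarrow> 'a set \<Rightarrow> ereal" where
  "setdist_e d x S = (INF z\<in>S. ereal (d x z))"   \<comment> \<open>Inf of empty set is \<infinity>\<close>

definition L_pt :: "'a set \<Rightarrow> ('a \<Rightarrow> 'a \<Rightarrow> real) \<Rightarrow> 'a set set \<Rightarrow> 'a \<Rightarrow> ereal" where
  "L_pt M d \<U> x = (SUP U\<in>\<U>. setdist_e d x (M - U))"

definition L_cov :: "'a set \<Rightarrow> ('a \<Rightarrow> 'a \<Rightarrow> real) \<Rightarrow> 'a set set \<Rightarrow> ereal" where
  "L_cov M d \<U> = (INF x\<in>M. L_pt M d \<U> x)"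

definition diam_e :: "('a \<Rightarrow> 'a \<Rightarrow> real) \<Rightarrow> 'a set \<Rightarrow> ereal" where
  "diam_e d A = (if A = {} then 0 else (SUP p\<in>A \<times> A. ereal (d (fst p) (snd p))))"

definition L_Diam :: "'a set \<Rightarrow> ('a \<Rightarrow> 'a \<Rightarrow> real) \<Rightarrow> 'a set set \<Rightarrow> ereal" where
  "L_Diam M d \<U> = Sup {D. 0 \<le> D \<and> (\<forall>A. A \<subseteq> M \<longrightarrow> diam_e d A \<le> D \<longrightarrow> (\<exists>U\<in>\<U>. A \<subseteq> U))}"

end

theory Submission
  imports Defs
begin

theorem lemma2p10:
  fixes M :: "'a set" and d :: "'a \<Rightarrow> 'a \<Rightarrow> real" and \<U> :: "'a set set"
  assumes "Metric_space M d"
    and "M \<noteq> {}"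
    and "\<Union>\<U> = M"
  shows "L_cov M d \<U> \<le> L_Diam M d \<U> \<and> L_Diam M d \<U> \<le> 2 * L_cov M d \<U>"
proof -
  interpret Metric_space M d by fact
  define S where "S = {D. 0 \<le> D \<and> (\<forall>A. A \<subseteq> M \<longrightarrow> diam_e d A \<le> D \<longrightarrow> (\<exists>U\<in>\<U>. A \<subseteq> U))}"
  have LD: "L_Diam M d \<U> = Sup S" unfolding L_Diam_def S_def by simp
  have Une: "\<U> \<noteq> {}" using assms(2,3) by auto
  have sd_nn: "0 \<le> setdist_e d x T" for x T
    unfolding setdist_e_def by (rule INF_greatest) simp
  have Lpt_nn: "0 \<le> L_pt M d \<U> x" for x
  proof -
    obtain U where "U \<in> \<U>" using Une by auto
    then have "setdist_e d x (M - U) \<le> L_pt M d \<U> x" unfolding L_pt_def by (rule SUP_upper)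
    then show ?thesis using sd_nn[of x "M - U"] by simp
  qed
  have Lcov_nn: "0 \<le> L_cov M d \<U>"
    unfolding L_cov_def by (rule INF_greatest) (rule Lpt_nn)
  have diam_le: "ereal (d a b) \<le> diam_e d A" if "a \<in> A" "b \<in> A" for a b A
  proof -
    have "ereal (d (fst (a,b)) (snd (a,b))) \<le> (SUP p\<in>A \<times> A. ereal (d (fst p) (snd p)))"
      by (rule SUP_upper) (use that in auto)
    then show ?thesis using that unfolding diam_e_def by auto
  qed
  have part1: "L_cov M d \<U> \<le> Sup S"
  proof (rule dense_le)
    fix D assume DL: "D < L_cov M d \<U>"
    show "D \<le> Sup S"
    proof (cases "0 \<le> D")
      case False
      have "0 \<in> S" 
      proof -
        have "\<exists>U\<in>\<U>. A \<subseteq> U" if "A \<subseteq> M" "diam_e d A \<le> 0" for A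
        proof (cases "A = {}")
          case True then show ?thesis using Une by auto
        next
          case False
          then obtain a where a: "a \<in> A" by auto
          have "A = {a}"
          proof
            show "A \<subseteq> {a}"
            proof
              fix b assume b: "b \<in> A"
              have "ereal (d a b) \<le> 0" using order_trans[OF diam_le[OF a b] that(2)] by simp
              then have "d a b = 0" using nonneg[of a b] by simp
              moreover have "a \<in> M" "b \<in> M" using a b that(1) by auto
              ultimately have "a = b" using zero[of a b] by blast
              then show "b \<in> {a}" by blast
            qed
          qed (use a in auto)
          have "a \<in> M" using a that(1) by auto
          then obtain U where "U \<in> \<U>" "a \<in> U" using assms(3) by auto
          then show ?thesis using \<open>A = {a}\<close> by blast
        qed
        then show ?thesis unfolding S_def by auto
      qed
      then have "0 \<le> Sup S" by (rule Sup_upper)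
      then show ?thesis using False by simp
    next
      case True
      have "D \<in> S" unfolding S_def
      proof (intro CollectI conjI allI impI True)
        fix A assume AM: "A \<subseteq> M" and dA: "diam_e d A \<le> D"
        show "\<exists>U\<in>\<U>. A \<subseteq> U"
        proof (cases "A = {}")
          case True then show ?thesis using Une by auto
        next
          case False
          then obtain x where x: "x \<in> A" by auto
          have "L_cov M d \<U> \<le> L_pt M d \<U> x" unfolding L_cov_def
            by (rule INF_lower) (use x AM in auto)
          with DL have "D < L_pt M d \<U> x" by simp
          then obtain U where U: "U \<in> \<U>" "D < setdist_e d x (M - U)"
            unfolding L_pt_def by (auto simp: less_SUP_iff)
          have "A \<subseteq> U"
          proof
            fix a assume a: "a \<in> A"
            show "a \<in> U"
            proof (rule ccontr)
              assume "a \<notin> U"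
              then have "a \<in> M - U" using a AM by auto
              then have "setdist_e d x (M - U) \<le> ereal (d x a)"
                unfolding setdist_e_def by (rule INF_lower)
              also have "\<dots> \<le> D" using diam_le[OF x a] dA by simp
              finally show False using U(2) by simp
            qed
          qed
          then show ?thesis using U(1) by auto
        qed
      qed
      then show ?thesis by (rule Sup_upper)
    qed
  qed
  have part2: "Sup S \<le> 2 * L_cov M d \<U>"
  proof (rule Sup_least)
    fix D assume DS: "D \<in> S"
    show "D \<le> 2 * L_cov M d \<U>"
    proof (rule dense_le)
      fix r assume rD: "r < D"
      show "r \<le> 2 * L_cov M d \<U>"
      proof (cases "r \<le> 0")
        case True
        have "2 * 0 \<le> 2 * L_cov M d \<U>" using Lcov_nn by (rule ereal_mult_left_mono) simp
        then have "0 \<le> 2 * L_cov M d \<U>" by simp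
        then show ?thesis using True by (rule order_trans[rotated])
      next
        case False
        then obtain s where s: "r = ereal s" "0 < s" using rD
          by (cases r) (auto simp: not_le)
        have "ereal (s/2) \<le> L_pt M d \<U> x" if xM: "x \<in> M" for x
        proof -
          define B where "B = {y\<in>M. d x y \<le> s/2}"
          have "diam_e d B \<le> ereal s"
          proof (cases "B = {}")
            case True then show ?thesis using s by (simp add: diam_e_def)
          next
            case False
            then show ?thesis unfolding diam_e_def
            proof (simp, intro SUP_least)
              fix p assume p: "p \<in> B \<times> B"
              then have "d (fst p) (snd p) \<le> d (fst p) x + d x (snd p)"
                using xM by (intro triangle) (auto simp: B_def)
              also have "\<dots> \<le> s"
              proof -
                have "d x (fst p) \<le> s/2" "d x (snd p) \<le> s/2" using p by (auto simp: B_def)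
                then show ?thesis using commute[of "fst p" x] by linarith
              qed
              finally show "ereal (d (fst p) (snd p)) \<le> ereal s" by simp
            qed
          qed
          also have "\<dots> \<le> D" using rD s by simp
          finally have "diam_e d B \<le> D" .
          moreover have "B \<subseteq> M" by (auto simp: B_def)
          ultimately obtain U where U: "U \<in> \<U>" "B \<subseteq> U" using DS unfolding S_def by blast
          have "ereal (s/2) \<le> setdist_e d x (M - U)"
            unfolding setdist_e_def
          proof (rule INF_greatest)
            fix z assume z: "z \<in> M - U"
            then have "z \<notin> B" using U by auto
            then have "s/2 < d x z" using z by (auto simp: B_def)
            then show "ereal (s/2) \<le> ereal (d x z)" by simp
          qed
          also have "\<dots> \<le> L_pt M d \<U> x" unfolding L_pt_def by (rule SUP_upper) fact
          finally show ?thesis .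
        qed
        then have "ereal (s/2) \<le> L_cov M d \<U>" unfolding L_cov_def by (rule INF_greatest)
        then have "2 * ereal (s/2) \<le> 2 * L_cov M d \<U>"
          by (rule ereal_mult_left_mono) simp
        then show ?thesis using s by simp
      qed
    qed
  qed
  show ?thesis unfolding LD using part1 part2 by (rule conjI)
qed

end
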